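(* Consider the query incentive model on a deterministic chain (every node has exactly one child), with root at position $0$ and agents at positions $1,2,3,\dots$, where each agent independently holds an answer with probability $p=1/n$, and let $h\ge 1$ be the desired level to which the root wants to propagate the query. Then there exists a sybil-proof direct referral incentive mechanism whose expected cost is $O(nh^2)$.
   Context: Model. The root issues a query which is propagated down the chain. An oblivious reward scheme on the chain is a function $r(i,s)$ ($i\ge1$, $s\ge0$, $i+s\le h$): if the first answer in the chain is at position $i+s\le h$, then the agent at position $i$ receives $r(i,s)$ (so $r(i,0)$ is the reward of the answer holder); if no agent among positions $1,\dots,h$ holds an answer, nobody is paid. A direct referral (DR) mechanism is one in which $r(i,s)=1$ whenever $s\notin\{0,1\}$, i.e. only the first answer holder and its direct parent may receive more than one unit. The expected cost is $\mathbb{E}[\sum_{i=1}^{J} r(i,J-i)]$, where $J$ is the position of the first answer if $J\le h$ (and the sum is empty otherwise). Sybil attacks. An agent may create fake identities: if it holds no answer it may insert $k\ge0$ additional identities between itself and its successor (so its identities occupy $k+1$ consecutive positions and all later agents are shifted down by $k$); if it holds an answer it may create a chain of identities and place its answer at any of them. The payoff of an agent is the expected total reward collected by all of its identities, conditioned on its own answer status and on the event that no earlier agent holds an answer. The mechanism is sybil-proof (with level $h$) if the following profile is a Nash equilibrium: every agent at position $<h$ without an answer propagates the query and creates no sybil; every agent holding an answer reports it without creating sybils and does not propagate; the agent at position $h$ reports its answer if it has one and does not propagate; all agents forward the selected answer. *)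

theory Defs
  imports Complex_Main
begin

text \<open>Oblivious reward schemes on a chain: r i s is the reward of the agent at
position i when the first answer is at position i + s (meaningful for
1 <= i and i + s <= h).\<close>

definition reward_scheme :: "(nat \<Rightarrow> nat \<Rightarrow> real) \<Rightarrow> nat \<Rightarrow> bool" where
  "reward_scheme r h \<longleftrightarrow> (\<forall>i s. 1 \<le> i \<and> i + s \<le> h \<longrightarrow> 0 \<le> r i s)"

definition direct_referral :: "(nat \<Rightarrow> nat \<Rightarrow> real) \<Rightarrow> nat \<Rightarrow> bool" where
  "direct_referral r h \<longleftrightarrow>
     (\<forall>i s. 1 \<le> i \<and> i + s \<le> h \<and> s \<noteq> 0 \<and> s \<noteq> 1 \<longrightarrow> r i s = 1)"

text \<open>Expected cost: J = position of first answer, P(J = j) = (1-p)^(j-1) p.\<close>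
definition expected_cost :: "(nat \<Rightarrow> nat \<Rightarrow> real) \<Rightarrow> real \<Rightarrow> nat \<Rightarrow> real" where
  "expected_cost r p h =
     (\<Sum>j=1..h. (1 - p) ^ (j - 1) * p * (\<Sum>i=1..j. r i (j - i)))"

text \<open>Expected payoff of the agent at position i (all earlier agents without
answer) which propagates the query after creating k extra identities
(occupying positions i..i+k), while it does not report an answer itself and all
later agents follow the prescribed profile: the first later answer holder is the
m-th agent after it (probability (1-p)^(m-1) p), located at position i+k+m,
and this only pays if i+k+m <= h.\<close>
definition prop_payoff :: "(nat \<Rightarrow> nat \<Rightarrow> real) \<Rightarrow> real \<Rightarrow> nat \<Rightarrow> nat \<Rightarrow> nat \<Rightarrow> real" where
  "prop_payoff r p h i k =
     (\<Sum>m=1..h - (i + k). (1 - p) ^ (m - 1) * p * (\<Sum>t\<le>k. r (i + t) (k + m - t)))"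

text \<open>Payoff of an answer holder at position i that creates a chain of
identities at positions i..i+k and places its answer at position i+k.\<close>
definition report_payoff :: "(nat \<Rightarrow> nat \<Rightarrow> real) \<Rightarrow> nat \<Rightarrow> nat \<Rightarrow> real" where
  "report_payoff r i k = (\<Sum>t\<le>k. r (i + t) (k - t))"

text \<open>Sybil-proofness (level h): the prescribed profile is a Nash equilibrium.
For each position i in 1..h, conditioned on no earlier answer:
 - without an answer (i < h): propagating with no sybil is at least as good as
   propagating with k sybils, and as not propagating (payoff 0);
 - with an answer: reporting at its own position (payoff r i 0) is at least as
   good as reporting behind k sybils (i+k <= h; answers placed beyond level h
   yield 0), as not reporting and propagating with k sybils, and as doing
   nothing (payoff 0).\<close>
definition sybil_proof :: "(nat \<Rightarrow> nat \<Rightarrow> real) \<Rightarrow> real \<Rightarrow> nat \<Rightarrow> bool" where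
  "sybil_proof r p h \<longleftrightarrow>
     (\<forall>i. 1 \<le> i \<and> i \<le> h \<longrightarrow>
        (i < h \<longrightarrow> (\<forall>k. prop_payoff r p h i k \<le> prop_payoff r p h i 0)
                   \<and> 0 \<le> prop_payoff r p h i 0)
      \<and> (\<forall>k. i + k \<le> h \<longrightarrow> report_payoff r i k \<le> r i 0)
      \<and> (\<forall>k. prop_payoff r p h i k \<le> r i 0)
      \<and> 0 \<le> r i 0)"

end

theory Submission
  imports Defs
begin

definition rr :: "real \<Rightarrow> nat \<Rightarrow> nat \<Rightarrow> nat \<Rightarrow> real" where
"rr c h i s = (if s = 0 then c * real (h-i) * (real (h-i) + 1)/2 + real (h-i)
   else if s = 1 then c * real (h-i) else 1)"

lemma geo: "(\<Sum>m=1..N. (1-p)^(m-1)*(p::real)) = 1-(1-p)^N"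
proof (induction N)
  case 0 then show ?case by simp
next
  case (Suc N)
  have "(\<Sum>m=1..Suc N. (1-p)^(m-1)*p) = (\<Sum>m=1..N. (1-p)^(m-1)*p) + (1-p)^N*p"
    by simp
  also have "\<dots> = 1-(1-p)^Suc N" using Suc by (simp add: algebra_simps)
  finally show ?case .
qed

lemma geo_le:
  assumes "0 \<le> (p::real)" "p \<le> 1" "A \<subseteq> {1..N}"
  shows "(\<Sum>m\<in>A. (1-p)^(m-1)*p) \<le> 1"
proof -
  have "(\<Sum>m\<in>A. (1-p)^(m-1)*p) \<le> (\<Sum>m=1..N. (1-p)^(m-1)*p)"
    by (rule sum_mono2) (use assms in auto)
  also have "\<dots> = 1-(1-p)^N" by (rule geo)
  also have "\<dots> \<le> 1" using assms by simp
  finally show ?thesis .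
qed

lemma rr_nonneg: "0 \<le> c \<Longrightarrow> 0 \<le> rr c h i s"
  unfolding rr_def by auto

lemma inner_sum:
  assumes "1 \<le> m"
  shows "(\<Sum>t\<le>k. rr c h (i+t) (k+m-t)) = real k + rr c h (i+k) m"
proof -
  have "(\<Sum>t\<le>k. rr c h (i+t) (k+m-t)) = (\<Sum>t<k. rr c h (i+t) (k+m-t)) + rr c h (i+k) m"
    by (simp add: lessThan_Suc_atMost[symmetric])
  also have "(\<Sum>t<k. rr c h (i+t) (k+m-t)) = (\<Sum>t<k. 1)"
    by (rule sum.cong) (use assms in \<open>auto simp: rr_def\<close>)
  finally show ?thesis by simp
qed

lemma prop_unfold:
  "prop_payoff (rr c h) p h i k =
     (\<Sum>m=1..h - (i + k). (1 - p) ^ (m - 1) * p * (real k + rr c h (i+k) m))"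
  unfolding prop_payoff_def by (rule sum.cong) (auto simp: inner_sum)

lemma prop_nonneg:
  assumes "0 \<le> p" "p \<le> 1" "0 \<le> c"
  shows "0 \<le> prop_payoff (rr c h) p h i k"
  unfolding prop_payoff_def using assms
  by (intro sum_nonneg mult_nonneg_nonneg) (auto intro: rr_nonneg)

lemma prop_le:
  assumes p: "0 < p" "p \<le> 1" and c: "0 \<le> c" "p*c \<ge> p + 2" and i: "i < h"
  shows "prop_payoff (rr c h) p h i k \<le> prop_payoff (rr c h) p h i 0"
proof (cases "k = 0")
  case True then show ?thesis by simp
next
  case False
  define q where "q = (\<lambda>m::nat. (1 - p) ^ (m - 1) * p)"
  have RHS: "p * (c * real (h-i)) \<le> prop_payoff (rr c h) p h i 0"
  proof -
    have "prop_payoff (rr c h) p h i 0 = (\<Sum>m=1..h - i. q m * rr c h i m)"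
      unfolding prop_payoff_def q_def by simp
    also have "\<dots> \<ge> q 1 * rr c h i 1"
      by (rule member_le_sum) (use i p c in \<open>auto simp: q_def intro!: mult_nonneg_nonneg rr_nonneg\<close>)
    finally show ?thesis by (simp add: q_def rr_def)
  qed
  show ?thesis
  proof (cases "h - (i+k) = 0")
    case True
    then have "prop_payoff (rr c h) p h i k = 0" by (simp add: prop_payoff_def)
    then show ?thesis using prop_nonneg[of p c h i 0] p c by simp
  next
    case N: False
    define N where "N = h - (i+k)"
    have ins: "{1..N} = insert 1 {2..N}" using N N_def by auto
    have "prop_payoff (rr c h) p h i k = (\<Sum>m\<in>insert 1 {2..N}. q m * (real k + rr c h (i+k) m))"
      unfolding prop_unfold q_def N_def[symmetric] ins ..
    also have "\<dots> = q 1 * (real k + rr c h (i+k) 1) + (\<Sum>m\<in>{2..N}. q m * (real k + rr c h (i+k) m))"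
      by simp
    also have "(\<Sum>m\<in>{2..N}. q m * (real k + rr c h (i+k) m)) = (\<Sum>m\<in>{2..N}. q m) * (real k + 1)"
      by (simp add: sum_distrib_right rr_def)
    also have "q 1 * (real k + rr c h (i+k) 1) = p * (real k + c * real (h - (i+k)))"
      by (simp add: q_def rr_def)
    finally have eq: "prop_payoff (rr c h) p h i k = p * (real k + c * real (h - (i+k))) + (\<Sum>m\<in>{2..N}. q m) * (real k + 1)"
      .
    have S: "(\<Sum>m\<in>{2..N}. q m) \<le> 1" unfolding q_def by (rule geo_le) (use p in auto)
    have S2: "(\<Sum>m\<in>{2..N}. q m) * (real k + 1) \<le> real k + 1"
      using S p by (intro mult_left_le_one_le) (auto simp: q_def intro!: sum_nonneg)
    have hk: "real (h - (i+k)) = real (h-i) - real k" using N by auto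
    have k1: "real k \<ge> 1" using False by simp
    have "p*c*real k \<ge> (p+2) * real k" using c k1 by (intro mult_right_mono) auto
    then have "p * (real k + c * real (h - (i+k))) + (real k + 1) \<le> p * (c * real (h-i))"
      unfolding hk using k1 p by (simp add: algebra_simps)
    then show ?thesis using eq S2 RHS by linarith
  qed
qed

lemma report_le:
  assumes c: "0 \<le> c" and ik: "i + k \<le> h"
  shows "report_payoff (rr c h) i k \<le> rr c h i 0"
proof (cases k)
  case 0 then show ?thesis by (simp add: report_payoff_def)
next
  case (Suc k')
  have "report_payoff (rr c h) i k = (\<Sum>t<k'. rr c h (i+t) (Suc k' - t)) + rr c h (i+k') 1 + rr c h (i+Suc k') 0"
    unfolding report_payoff_def Suc by (simp add: lessThan_Suc_atMost[symmetric])
  also have "(\<Sum>t<k'. rr c h (i+t) (Suc k' - t)) = (\<Sum>t<k'. 1)"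
    by (rule sum.cong) (auto simp: rr_def)
  finally have eq: "report_payoff (rr c h) i k = real k' + rr c h (i+k') 1 + rr c h (i+Suc k') 0" by simp
  define J where "J = real (h - i)"
  define K where "K = real k'"
  have h1: "real (h - (i+k')) = J - K" using ik Suc by (auto simp: J_def K_def)
  have h2: "real (h - (i+Suc k')) = J - K - 1" using ik Suc by (auto simp: J_def K_def)
  have KJ: "K + 1 \<le> J" "0 \<le> K" using ik Suc by (auto simp: J_def K_def)
  have nn: "0 \<le> c * (K * (2*J - K + 1))" using KJ c by (intro mult_nonneg_nonneg) auto
  have "K + c * (J - K) + (c * (J - K - 1) * (J - K - 1 + 1) / 2 + (J - K - 1)) \<le> c * J * (J + 1) / 2 + J"
    using nn by (simp add: field_simps)
  then show ?thesis unfolding eq rr_def h1 h2 by (simp add: J_def K_def)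
qed

lemma prop_le_r0:
  assumes p: "0 < p" "p \<le> 1" and c: "0 \<le> c" "p*c \<ge> p + 2" and i: "i \<le> h"
  shows "prop_payoff (rr c h) p h i k \<le> rr c h i 0"
proof (cases "i = h")
  case True then show ?thesis by (simp add: prop_payoff_def rr_def)
next
  case False
  then have ih: "i < h" using i by simp
  have "prop_payoff (rr c h) p h i 0 = (\<Sum>m=1..h - i. (1-p)^(m-1)*p * rr c h i m)"
    unfolding prop_payoff_def by simp
  also have "\<dots> \<le> (\<Sum>m=1..h - i. (1-p)^(m-1)*p * (c * real (h-i) + 1))"
  proof (rule sum_mono)
    fix m assume "m \<in> {1..h-i}"
    then have "m \<noteq> 0" by auto
    then have "rr c h i m \<le> c * real (h-i) + 1"
      using c by (simp add: rr_def)
    then show "(1-p)^(m-1)*p * rr c h i m \<le> (1-p)^(m-1)*p * (c * real (h-i) + 1)"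
      using p by (intro mult_left_mono) auto
  qed
  also have "\<dots> = (\<Sum>m=1..h - i. (1-p)^(m-1)*p) * (c * real (h-i) + 1)"
    by (simp add: sum_distrib_right)
  also have "\<dots> \<le> c * real (h-i) + 1"
    using geo_le[of p "{1..h-i}" "h-i"] p c
    by (intro mult_left_le_one_le) (auto intro!: sum_nonneg)
  also have "\<dots> \<le> rr c h i 0"
  proof -
    have J: "real (h-i) \<ge> 1" using ih by simp
    have "c * real (h-i) * 1 \<le> c * real (h-i) * ((real (h-i) + 1)/2)"
      using J c by (intro mult_left_mono) auto
    then show ?thesis using J by (simp add: rr_def)
  qed
  finally show ?thesis using prop_le[OF p c ih, of k] by linarith
qed

lemma rr_point:
  assumes c: "0 \<le> c" and ij: "i \<le> j"
  shows "rr c h i (j-i) \<le> 1 + (if i = j then c * real h * (real h + 1)/2 + real h else 0)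
      + (if i = j - 1 then c * real h else 0)"
proof -
  have x: "real (h-i) \<le> real h" by simp
  have a: "c * real (h-i) * (real (h-i) + 1) / 2 + real (h-i) \<le> c * real h * (real h + 1)/2 + real h"
  proof -
    have "c * real (h-i) \<le> c * real h" using c x by (intro mult_left_mono) auto
    moreover have "c * real (h-i) * (real (h-i) + 1) \<le> c * real h * (real h + 1)"
      using c x by (intro mult_mono) auto
    ultimately show ?thesis using x by linarith
  qed
  have b: "c * real (h-i) \<le> c * real h" using c x by (intro mult_left_mono) auto
  have nA: "0 \<le> c * real h * (real h + 1)/2 + real h" using c by simp
  have nB: "0 \<le> c * real h" using c by simp
  show ?thesis
    using a b nA nB ij by (auto simp: rr_def)
qed

lemma cost_le:
  assumes p: "0 < p" "p \<le> 1" and c: "0 \<le> c"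
  shows "expected_cost (rr c h) p h \<le> real h + (c * real h * (real h + 1)/2 + real h) + c * real h"
proof -
  define A where "A = c * real h * (real h + 1)/2 + real h"
  define B where "B = c * real h"
  have nA: "0 \<le> A" using c by (simp add: A_def)
  have nB: "0 \<le> B" using c by (simp add: B_def)
  have inner: "(\<Sum>i=1..j. rr c h i (j - i)) \<le> real h + A + B" if j: "j \<in> {1..h}" for j
  proof -
    have "(\<Sum>i=1..j. rr c h i (j - i)) \<le> (\<Sum>i=1..j. 1 + (if i = j then A else 0) + (if i = j - 1 then B else 0))"
    proof (rule sum_mono)
      fix i assume "i \<in> {1..j}"
      then show "rr c h i (j - i) \<le> 1 + (if i = j then A else 0) + (if i = j - 1 then B else 0)"
        using rr_point[OF c, of i j h] unfolding A_def B_def by simp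
    qed
    also have "\<dots> = real j + (\<Sum>i=1..j. (if i = j then A else 0)) + (\<Sum>i=1..j. (if i = j - 1 then B else 0))"
      by (simp add: sum.distrib)
    also have "(\<Sum>i=1..j. (if i = j then A else 0)) = A" using j by (simp add: sum.delta')
    also have "(\<Sum>i=1..j. (if i = j - 1 then B else 0)) \<le> B"
      using nB by (simp add: sum.delta')
    finally show ?thesis using j by simp
  qed
  have "expected_cost (rr c h) p h \<le> (\<Sum>j=1..h. (1 - p) ^ (j - 1) * p * (real h + A + B))"
    unfolding expected_cost_def
    by (rule sum_mono) (use p inner in \<open>auto intro!: mult_left_mono\<close>)
  also have "\<dots> = (\<Sum>j=1..h. (1 - p) ^ (j - 1) * p) * (real h + A + B)"
    by (simp add: sum_distrib_right)
  also have "\<dots> \<le> real h + A + B"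
    using geo_le[of p "{1..h}" h] p nA nB
    by (intro mult_left_le_one_le) (auto intro!: sum_nonneg)
  finally show ?thesis by (simp add: A_def B_def)
qed

theorem theorem1p1:
  shows "\<exists>C::real. C > 0 \<and>
    (\<forall>(n::nat) (h::nat). 1 \<le> n \<longrightarrow> 1 \<le> h \<longrightarrow>
      (\<exists>r. reward_scheme r h \<and> direct_referral r h \<and> sybil_proof r (1 / real n) h \<and>
           expected_cost r (1 / real n) h \<le> C * real n * real h ^ 2))"
proof (intro exI[of _ 8] conjI allI impI)
  fix n h :: nat
  assume n: "1 \<le> n" and h: "1 \<le> h"
  define p where "p = 1 / real n"
  define c where "c = 2 * real n + 1"
  have p: "0 < p" "p \<le> 1" using n by (auto simp: p_def)
  have c: "0 \<le> c" "p * c \<ge> p + 2" using n by (auto simp: p_def c_def field_simps)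
  show "\<exists>r. reward_scheme r h \<and> direct_referral r h \<and> sybil_proof r (1 / real n) h \<and>
           expected_cost r (1 / real n) h \<le> 8 * real n * real h ^ 2"
  proof (intro exI[of _ "rr c h"] conjI)
    show "reward_scheme (rr c h) h" unfolding reward_scheme_def using rr_nonneg[OF c(1)] by auto
    show "direct_referral (rr c h) h" unfolding direct_referral_def by (auto simp: rr_def)
    show "sybil_proof (rr c h) (1 / real n) h"
      unfolding sybil_proof_def p_def[symmetric]
      using prop_le[OF p c] prop_nonneg[of p c] p c report_le[OF c(1)] prop_le_r0[OF p c]
        rr_nonneg[OF c(1)] by auto
    have "expected_cost (rr c h) p h \<le> real h + (c * real h * (real h + 1)/2 + real h) + c * real h"
      by (rule cost_le[OF p c(1)])
    also have "\<dots> \<le> 8 * real n * real h ^ 2"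
    proof -
      have hh: "real h \<le> real h ^ 2" using h by (simp add: power2_eq_square)
      have "c * real h * (real h + 1)/2 \<le> c * real h ^ 2"
        using c h by (simp add: power2_eq_square field_simps mult_left_mono)
      moreover have "c * real h \<le> c * real h ^ 2" using hh c by (intro mult_left_mono)
      moreover have "real h ^ 2 \<le> real n * real h ^ 2" using mult_right_mono[of 1 "real n" "real h ^ 2"] n by simp
      moreover have "c * real h ^ 2 = 2 * (real n * real h ^ 2) + real h ^ 2"
        unfolding c_def by (simp add: algebra_simps)
      moreover have "8 * real n * real h ^ 2 = 8 * (real n * real h ^ 2)" by simp
      ultimately show ?thesis using hh by linarith
    qed
    finally show "expected_cost (rr c h) (1 / real n) h \<le> 8 * real n * real h ^ 2"
      by (simp add: p_def)
  qed
qed simp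

end
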